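(* Under the standing setup, let $u\in\widetilde X\setminus\overline X$, let $z^*$ be as in the hypothesis below, set $r_u=\min\{1,\frac{\varepsilon\|u-u_{NN}\|}{480}\}$, and for $v\in B(u,r_u)\cap\widetilde X$ set $\delta_v=\frac{240\|u-v\|}{\varepsilon\|u-u_{NN}\|}$ and $z_v=(1-\delta_v)\beta(u)+\delta_vz^*$. Then $\tilde g_i(z_v,v)\le0$ for all $i=1,\ldots,2\ell$, i.e., $z_v\in\widetilde F_v$ (in particular $\|\beta(v)\|\le\|z_v\|$).
   Context: Norms are Euclidean; $B(x,r)$ is the open ball. Standing setup: $X\subseteq\mathbb{R}^d$ has reach $\tau_X>0$, where $\tau_X=\sup\{t\ge0:\text{every }x\text{ with }d(x,X)<t\text{ has a unique closest point in }\overline X\}$; $\widetilde X=X+B(0,\tau_X/2)$; for $u\in\widetilde X$, $u_{NN}$ is the unique closest point to $u$ in $\overline X$, and it is a known fact that $\|u_{NN}-v_{NN}\|\le2\|u-v\|$ for all $u,v\in\widetilde X$. $\varepsilon\in(0,1)$. $S_X=\overline{\{(x-y)/\|x-y\|:x\ne y\in X\}}$. A linear $\Pi$ provides $\eta$-convex hull distortion for $T\subseteq S^{d-1}$ if $|\,\|\Pi x\|-\|x\|\,|<\eta$ for all $x\in\operatorname{conv}(T)$. $\mathcal C=\{w_1,\ldots,w_\ell\}\subseteq S_X$ is finite with every $v\in S_X$ within distance $<\varepsilon/40$ of some $w_i$; $\Pi\in\mathbb{R}^{m\times d}$ provides $\frac{\varepsilon}{240}$-convex hull distortion for $S_X$.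 For $z\in\mathbb{R}^m$, $u\in\widetilde X$, $i=1,\ldots,\ell$: $\tilde g_i(z,u)=\langle z,\Pi w_i\rangle-\langle u-u_{NN},w_i\rangle-\frac{\varepsilon}{30}\|u-u_{NN}\|$, $\tilde g_{\ell+i}(z,u)=\langle u-u_{NN},w_i\rangle-\langle z,\Pi w_i\rangle-\frac{\varepsilon}{30}\|u-u_{NN}\|$; $\widetilde F_u=\{z:\tilde g_i(z,u)\le0\ \forall i\}$; $\beta(u)=\arg\min_{z\in\widetilde F_u}\|z\|$. Hypothesis on $z^*$: $z^*\in\mathbb{R}^m$ is any point with $\|z^*\|\le\|u-u_{NN}\|$ and $\tilde g_i(z^*,u)\le-\frac{\varepsilon}{60}\|u-u_{NN}\|$ for all $i=1,\ldots,2\ell$ (such a point exists). *)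

theory Defs
  imports "HOL-Analysis.Analysis" "HOL-Library.Extended_Real"
begin

definition reach :: "'a::euclidean_space set \<Rightarrow> ereal" where
  "reach X = Sup {ereal t | t. t \<ge> 0 \<and>
      (\<forall>x. infdist x X < t \<longrightarrow> (\<exists>!y. y \<in> closure X \<and> dist x y = infdist x X))}"

definition Xtilde :: "'a::euclidean_space set \<Rightarrow> 'a set" where
  "Xtilde X = {y + b | y b. y \<in> X \<and> ereal (norm b) < reach X / 2}"

definition nn :: "'a::euclidean_space set \<Rightarrow> 'a \<Rightarrow> 'a" where
  "nn X u = (THE y. y \<in> closure X \<and> dist u y = infdist u X)"

definition secants :: "'a::euclidean_space set \<Rightarrow> 'a set" where
  "secants X = closure {(1 / norm (x - y)) *\<^sub>R (x - y) | x y. x \<in> X \<and> y \<in> X \<and> x \<noteq> y}"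

definition hull_distortion :: "('a::euclidean_space \<Rightarrow> 'b::euclidean_space) \<Rightarrow> real \<Rightarrow> 'a set \<Rightarrow> bool" where
  "hull_distortion P eta T \<longleftrightarrow> (\<forall>x \<in> convex hull T. \<bar>norm (P x) - norm x\<bar> < eta)"

definition gt :: "'a::euclidean_space set \<Rightarrow> ('a \<Rightarrow> 'b::euclidean_space) \<Rightarrow> (nat \<Rightarrow> 'a) \<Rightarrow> nat
    \<Rightarrow> real \<Rightarrow> nat \<Rightarrow> 'b \<Rightarrow> 'a \<Rightarrow> real" where
  "gt X P w l eps i z u =
     (if i \<le> l then inner z (P (w i)) - inner (u - nn X u) (w i) - eps / 30 * norm (u - nn X u)
      else inner (u - nn X u) (w (i - l)) - inner z (P (w (i - l))) - eps / 30 * norm (u - nn X u))"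

definition Ft :: "'a::euclidean_space set \<Rightarrow> ('a \<Rightarrow> 'b::euclidean_space) \<Rightarrow> (nat \<Rightarrow> 'a) \<Rightarrow> nat
    \<Rightarrow> real \<Rightarrow> 'a \<Rightarrow> 'b set" where
  "Ft X P w l eps u = {z. \<forall>i \<in> {1..2*l}. gt X P w l eps i z u \<le> 0}"

definition beta :: "'a::euclidean_space set \<Rightarrow> ('a \<Rightarrow> 'b::euclidean_space) \<Rightarrow> (nat \<Rightarrow> 'a) \<Rightarrow> nat
    \<Rightarrow> real \<Rightarrow> 'a \<Rightarrow> 'b" where
  "beta X P w l eps u = arg_min norm (\<lambda>z. z \<in> Ft X P w l eps u)"

end

theory Submission
  imports Defs
begin


definition uniq :: "'a::euclidean_space set \<Rightarrow> real \<Rightarrow> bool" where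
  "uniq X \<tau> \<longleftrightarrow> (\<forall>x. infdist x X < \<tau> \<longrightarrow> (\<exists>!y. y \<in> closure X \<and> dist x y = infdist x X))"

lemma infdist_le_closure:
  fixes X :: "'a::euclidean_space set"
  assumes "X \<noteq> {}" "a \<in> closure X"
  shows "infdist x X \<le> dist x a"
proof -
  have "infdist a X = 0" using assms in_closure_iff_infdist_zero by blast
  then show ?thesis using infdist_triangle[of x X a] by simp
qed

lemma nn_props:
  assumes "uniq X \<tau>" "infdist x X < \<tau>"
  shows "nn X x \<in> closure X \<and> dist x (nn X x) = infdist x X"
proof -
  have "\<exists>!y. y \<in> closure X \<and> dist x y = infdist x X" using assms unfolding uniq_def by blast
  then show ?thesis unfolding nn_def by (rule theI')
qed

lemma nn_eq:
  assumes "uniq X \<tau>" "infdist x X < \<tau>" "y \<in> closure X" "dist x y = infdist x X"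
  shows "nn X x = y"
proof -
  have "\<exists>!y. y \<in> closure X \<and> dist x y = infdist x X" using assms unfolding uniq_def by blast
  then show ?thesis unfolding nn_def by (rule the1_equality) (use assms in auto)
qed

lemma nn_cont:
  fixes X :: "'a::euclidean_space set"
  assumes u: "uniq X \<tau>" and S: "S \<subseteq> {x. infdist x X < \<tau>}" and b: "bounded S"
  shows "continuous_on S (nn X)"
proof -
  obtain B where B: "\<And>x. x \<in> S \<Longrightarrow> norm x \<le> B" using b bounded_iff by blast
  define T where "T = cball (0::'a) (B + \<tau>)"
  have fim: "nn X \<in> S \<rightarrow> T"
  proof
    fix x assume x: "x \<in> S"
    have "dist x (nn X x) < \<tau>" using nn_props[OF u] S x by auto
    moreover have "norm (nn X x) \<le> norm x + norm (nn X x - x)" by (rule norm_triangle_sub)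
    moreover have "norm (nn X x - x) = dist x (nn X x)" by (simp add: dist_norm norm_minus_commute)
    ultimately have "norm (nn X x) \<le> norm x + \<tau>" by linarith
    then show "nn X x \<in> T" using B[OF x] unfolding T_def by simp
  qed
  have cT: "compact T" unfolding T_def by simp
  define C where "C = {z :: 'a \<times> 'a. snd z \<in> closure X \<and> dist (fst z) (snd z) = infdist (fst z) X}"
  have cC: "closed C" unfolding C_def
  proof (intro closed_Collect_conj)
    have "{z::'a\<times>'a. snd z \<in> closure X} = UNIV \<times> closure X" by auto
    then show "closed {z::'a\<times>'a. snd z \<in> closure X}" by (simp add: closed_Times)
    show "closed {z::'a\<times>'a. dist (fst z) (snd z) = infdist (fst z) X}"
      by (intro closed_Collect_eq continuous_intros)
  qed
  have eq: "(\<lambda>x. Pair x (nn X x)) ` S = S \<times> T \<inter> C"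
  proof
    show "(\<lambda>x. (x, nn X x)) ` S \<subseteq> S \<times> T \<inter> C"
    proof (rule image_subsetI)
      fix x assume x: "x \<in> S"
      then have "infdist x X < \<tau>" using S by blast
      then have "nn X x \<in> closure X \<and> dist x (nn X x) = infdist x X" by (rule nn_props[OF u])
      then show "(x, nn X x) \<in> S \<times> T \<inter> C" using x fim unfolding C_def by auto
    qed
    show "S \<times> T \<inter> C \<subseteq> (\<lambda>x. (x, nn X x)) ` S"
    proof
      fix z assume z: "z \<in> S \<times> T \<inter> C"
      then have a: "fst z \<in> S" "snd z \<in> closure X" "dist (fst z) (snd z) = infdist (fst z) X"
        unfolding C_def by auto
      then have "infdist (fst z) X < \<tau>" using S by blast
      then have "nn X (fst z) = snd z" using nn_eq[OF u _ a(2,3)] by blast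
      show "z \<in> (\<lambda>x. (x, nn X x)) ` S" 
      proof (rule image_eqI)
        show "z = (fst z, nn X (fst z))" using \<open>nn X (fst z) = snd z\<close> by simp
      qed (use a in simp)
    qed
  qed
  have "closedin (top_of_set (S \<times> T)) ((\<lambda>x. Pair x (nn X x)) ` S)"
    unfolding eq using cC by (simp add: closedin_closed_Int)
  then show ?thesis using continuous_closed_graph_eq[OF cT fim] by blast
qed



lemma ray:
  fixes X :: "'a::euclidean_space set"
  assumes u: "uniq X \<tau>" and Xne: "X \<noteq> {}" and p: "p \<in> closure X"
    and s: "0 < s" "s \<le> t0" "t0 < \<tau>" and n: "norm n = 1"
    and ns: "infdist (p + s *\<^sub>R n) X = s"
  shows "infdist (p + t0 *\<^sub>R n) X = t0"
proof -
  define K where "K = {s..t0} \<inter> {t. infdist (p + t *\<^sub>R n) X = t}"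
  have cK: "closed K" unfolding K_def
    by (intro closed_Int closed_real_atLeastAtMost closed_Collect_eq continuous_intros)
  have sK: "s \<in> K" using s ns unfolding K_def by auto
  have bK: "bdd_above K" unfolding K_def by (rule bdd_aboveI[of _ t0]) auto
  define T where "T = Sup K"
  have TK: "T \<in> K" unfolding T_def using closed_contains_Sup[OF _ bK cK] sK by blast
  have Tup: "\<And>t. t \<in> K \<Longrightarrow> t \<le> T" unfolding T_def using bK by (simp add: cSup_upper)
  have T: "s \<le> T" "T \<le> t0" "infdist (p + T *\<^sub>R n) X = T" using TK unfolding K_def by auto
  show ?thesis
  proof (cases "T = t0")
    case True then show ?thesis using T by simp
  next
    case False
    then have Tlt: "T < t0" using T by simp
    define y where "y = p + T *\<^sub>R n"
    define h where "h = min (T/3) (t0 - T)"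
    have h: "0 < h" "h \<le> T/3" "T + h \<le> t0" using Tlt s T unfolding h_def by (auto simp: min_def)
    have dyp: "dist y p = T" unfolding y_def using n T s by (simp add: dist_norm)
    have iy: "infdist y X = T" using T unfolding y_def by simp
    have cb: "\<And>z. z \<in> cball y h \<Longrightarrow> infdist z X < \<tau> \<and> T - h \<le> infdist z X"
    proof -
      fix z assume "z \<in> cball y h"
      then have dz: "dist y z \<le> h" by simp
      have "infdist z X \<le> infdist y X + dist z y" by (rule infdist_triangle)
      moreover have "infdist y X \<le> infdist z X + dist y z" by (rule infdist_triangle)
      ultimately show "infdist z X < \<tau> \<and> T - h \<le> infdist z X"
        using dz iy h s by (simp add: dist_commute)
    qed
    define f where "f z = y + (h / norm (z - nn X z)) *\<^sub>R (z - nn X z)" for z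
    have nz: "norm (z - nn X z) = infdist z X" if "infdist z X < \<tau>" for z
      using nn_props[OF u that] by (simp add: dist_norm)
    have pos: "0 < norm (z - nn X z)" if "z \<in> cball y h" for z
      using cb[OF that] nz h by auto
    have cnn: "continuous_on (cball y h) (nn X)"
      by (rule nn_cont[OF u]) (use cb in auto)
    have cf: "continuous_on (cball y h) f" unfolding f_def
      by (intro continuous_intros cnn) (use pos in auto)
    have fim: "f \<in> cball y h \<rightarrow> cball y h"
    proof
      fix z assume "z \<in> cball y h"
      then have "dist y (f z) = h" using pos[of z] h unfolding f_def by (simp add: dist_norm)
      then show "f z \<in> cball y h" by simp
    qed
    obtain z where z: "z \<in> cball y h" "f z = z"
      using brouwer[of "cball y h" f] cf fim h by auto
    define q where "q = nn X z"
    define D where "D = norm (z - q)"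
    have zU: "infdist z X < \<tau>" and zlow: "T - h \<le> infdist z X" using cb[OF z(1)] by auto
    have D: "D = infdist z X" unfolding D_def q_def using nz[OF zU] .
    have q: "q \<in> closure X" unfolding q_def using nn_props[OF u zU] by simp
    have Dh: "h < D" using D zlow h s by linarith
    have zeq: "z - y = (h / D) *\<^sub>R (z - q)" using z(2) unfolding f_def D_def q_def
      by (metis add_diff_cancel_left')
    have yq: "y - q = (1 - h / D) *\<^sub>R (z - q)"
      using zeq by (simp add: algebra_simps)
    have hD: "h / D < 1" using Dh h by simp
    have "norm (y - q) = \<bar>1 - h/D\<bar> * D" using yq by (simp add: D_def)
    also have "\<dots> = (1 - h/D) * D" using hD by simp
    also have "\<dots> = D - h" using Dh h by (simp add: field_simps)
    finally have nyq: "norm (y - q) = D - h" .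
    have Dpos: "0 < D" using Dh h by simp
    have "norm (z - y) = \<bar>h/D\<bar> * norm (z - q)" using zeq by simp
    then have "norm (z - y) = \<bar>h/D\<bar> * D" unfolding D_def .
    then have dzy: "dist z y = h" using Dpos h by (simp add: dist_norm)
    have "infdist z X \<le> infdist y X + dist z y" by (rule infdist_triangle)
    then have l1: "D - h \<le> infdist y X" using D dzy by simp
    have l2: "infdist y X \<le> dist y q" by (rule infdist_le_closure[OF Xne q])
    have dyq: "dist y q = infdist y X" using l1 l2 nyq by (simp add: dist_norm)
    have yU: "infdist y X < \<tau>" using iy T s by simp
    have qp: "q = p"
    proof -
      have "nn X y = q" by (rule nn_eq[OF u yU q dyq])
      moreover have "nn X y = p" by (rule nn_eq[OF u yU p]) (use dyp iy in simp)
      ultimately show ?thesis by simp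
    qed
    have DT: "D - h = T" using dyq nyq iy by (simp add: dist_norm)
    have "y - p = (1 - h / D) *\<^sub>R (z - p)" using yq qp by simp
    then have "(1 - h / D) *\<^sub>R (z - p) = T *\<^sub>R n" unfolding y_def by simp
    then have e0: "(D / T) *\<^sub>R ((1 - h / D) *\<^sub>R (z - p)) = (D / T) *\<^sub>R (T *\<^sub>R n)" by simp
    have f1: "(D / T) * (1 - h / D) = 1"
    proof -
      have "T > 0" using T s by simp
      have "(D / T) * (1 - h / D) = (D - h) / T" using Dpos \<open>T > 0\<close> by (simp add: field_simps)
      also have "\<dots> = T / T" by (simp only: DT)
      also have "\<dots> = 1" using \<open>T > 0\<close> by simp
      finally show ?thesis .
    qed
    have f2: "(D / T) * T = D" using T s by simp
    have "(D / T) *\<^sub>R ((1 - h / D) *\<^sub>R (z - p)) = z - p" by (simp only: scaleR_scaleR f1 scaleR_one)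
    moreover have "(D / T) *\<^sub>R (T *\<^sub>R n) = D *\<^sub>R n" by (simp only: scaleR_scaleR f2)
    ultimately have "z - p = D *\<^sub>R n" using e0 by simp
    then have zp: "z = p + (T + h) *\<^sub>R n" using DT by (simp add: algebra_simps)
    have "T + h \<in> K" unfolding K_def using zp D DT T h by auto
    then show ?thesis using Tup h by fastforce
  qed
qed



lemma norm_add_scale_sq:
  fixes v w :: "'a::real_inner"
  shows "(norm (v + c *\<^sub>R w))^2 = (norm v)^2 + 2 * c * (v \<bullet> w) + c^2 * (w \<bullet> w)"
  by (simp only: power2_norm_eq_inner)
     (simp add: inner_add_left inner_add_right inner_commute power2_eq_square algebra_simps)

lemma normal_ineq:
  fixes X :: "'a::euclidean_space set"
  assumes u: "uniq X \<tau>" and Xne: "X \<noteq> {}" and d: "infdist x X \<le> t0" "0 < t0" "t0 < \<tau>"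
    and a: "a \<in> closure X"
  shows "2 * t0 * ((a - nn X x) \<bullet> (x - nn X x)) \<le> infdist x X * (norm (a - nn X x))^2"
proof -
  define p where "p = nn X x"
  define dd where "dd = infdist x X"
  have xU: "infdist x X < \<tau>" using d by simp
  have p: "p \<in> closure X" "dist x p = dd" using nn_props[OF u xU] unfolding p_def dd_def by auto
  have dd0: "0 \<le> dd" unfolding dd_def by (rule infdist_nonneg)
  show ?thesis
  proof (cases "dd = 0")
    case True
    then have "x = p" using p by simp
    then show ?thesis unfolding p_def[symmetric] dd_def[symmetric] using True by simp
  next
    case False
    then have ddp: "0 < dd" using dd0 by simp
    define n where "n = (1 / dd) *\<^sub>R (x - p)"
    have nxp: "norm (x - p) = dd" using p by (simp add: dist_norm)
    have n1: "norm n = 1" unfolding n_def using nxp ddp by simp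
    have pdn: "p + dd *\<^sub>R n = x" unfolding n_def using ddp by simp
    have s: "infdist (p + dd *\<^sub>R n) X = dd" by (subst pdn) (simp add: dd_def)
    have r: "infdist (p + t0 *\<^sub>R n) X = t0"
      by (rule ray[OF u Xne p(1) ddp _ d(3) n1 s]) (use d dd_def in simp)
    have "t0 \<le> dist (p + t0 *\<^sub>R n) a" using infdist_le_closure[OF Xne a, of "p + t0 *\<^sub>R n"] r by simp
    then have "t0^2 \<le> (norm ((p - a) + t0 *\<^sub>R n))^2"
      using d(2) by (simp add: dist_norm power_mono algebra_simps)
    also have "\<dots> = (norm (p - a))^2 + 2 * t0 * ((p - a) \<bullet> n) + t0^2 * (n \<bullet> n)"
      by (rule norm_add_scale_sq)
    also have "n \<bullet> n = 1" using n1 by (simp add: power2_norm_eq_inner[symmetric])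
    finally have i1: "2 * t0 * ((a - p) \<bullet> n) \<le> (norm (a - p))^2"
      by (simp add: norm_minus_commute inner_diff_left algebra_simps)
    have "(a - p) \<bullet> (x - p) = dd * ((a - p) \<bullet> n)" unfolding n_def using ddp by simp
    then have "2 * t0 * ((a - p) \<bullet> (x - p)) = dd * (2 * t0 * ((a - p) \<bullet> n))" by simp
    also have "\<dots> \<le> dd * (norm (a - p))^2" by (rule mult_left_mono[OF i1 dd0])
    finally show ?thesis unfolding p_def dd_def .
  qed
qed

lemma nn_lip:
  fixes X :: "'a::euclidean_space set"
  assumes u: "uniq X \<tau>" and Xne: "X \<noteq> {}" and dx: "infdist x X \<le> m" and dy: "infdist y X \<le> m"
    and m: "2 * m < \<tau>"
  shows "norm (nn X x - nn X y) \<le> 2 * norm (x - y)"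
proof -
  define p where "p = nn X x"
  define q where "q = nn X y"
  have m0: "0 \<le> m" using dx infdist_nonneg[of x X] by simp
  have xU: "infdist x X < \<tau>" and yU: "infdist y X < \<tau>" using dx dy m m0 by auto
  have p: "p \<in> closure X" "dist x p = infdist x X" using nn_props[OF u xU] unfolding p_def by auto
  have q: "q \<in> closure X" "dist y q = infdist y X" using nn_props[OF u yU] unfolding q_def by auto
  show ?thesis
  proof (cases "m = 0")
    case True
    then have "x = p" "y = q" using p q dx dy infdist_nonneg[of x X] infdist_nonneg[of y X] by auto
    then show ?thesis unfolding p_def[symmetric] q_def[symmetric] by simp
  next
    case False
    then have mp: "0 < m" using m0 by simp
    define t0 where "t0 = 2 * m"
    have t0: "0 < t0" "t0 < \<tau>" "infdist x X \<le> t0" "infdist y X \<le> t0"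
      using mp m dx dy unfolding t0_def by auto
    have I1: "2 * t0 * ((q - p) \<bullet> (x - p)) \<le> infdist x X * (norm (q - p))^2"
      using normal_ineq[OF u Xne t0(3) t0(1,2) q(1)] unfolding p_def .
    have I2: "2 * t0 * ((p - q) \<bullet> (y - q)) \<le> infdist y X * (norm (p - q))^2"
      using normal_ineq[OF u Xne t0(4) t0(1,2) p(1)] unfolding q_def .
    define N where "N = (norm (q - p))^2"
    define Iv where "Iv = (q - p) \<bullet> (x - y)"
    have idt: "(q - p) \<bullet> (x - p) + (p - q) \<bullet> (y - q) = Iv + N"
      unfolding Iv_def N_def
      by (simp add: power2_norm_eq_inner inner_diff_left inner_diff_right inner_commute algebra_simps)
    have npq: "norm (p - q) = norm (q - p)" by (rule norm_minus_commute)
    have N0: "0 \<le> N" unfolding N_def by simp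
    have I1': "2 * t0 * ((q - p) \<bullet> (x - p)) \<le> infdist x X * N" using I1 unfolding N_def .
    have I2': "2 * t0 * ((p - q) \<bullet> (y - q)) \<le> infdist y X * N" using I2 npq unfolding N_def by simp
    have "2 * t0 * (Iv + N) = 2 * t0 * ((q - p) \<bullet> (x - p)) + 2 * t0 * ((p - q) \<bullet> (y - q))"
      unfolding idt[symmetric] by (simp add: distrib_left)
    also have "\<dots> \<le> infdist x X * N + infdist y X * N" using I1' I2' by linarith
    also have "\<dots> = (infdist x X + infdist y X) * N" by (simp add: distrib_right)
    finally have "2 * t0 * (Iv + N) \<le> (infdist x X + infdist y X) * N" .
    also have "\<dots> \<le> t0 * N" using dx dy N0 unfolding t0_def by (intro mult_right_mono) auto
    finally have "t0 * (2 * Iv + N) \<le> 0" by (simp add: algebra_simps)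
    then have "2 * Iv + N \<le> 0" using t0(1) by (simp add: mult_le_0_iff)
    moreover have "- Iv \<le> norm (q - p) * norm (x - y)"
      unfolding Iv_def using Cauchy_Schwarz_ineq2[of "q - p" "x - y"] by linarith
    ultimately have "norm (q - p) * norm (q - p) \<le> norm (q - p) * (2 * norm (x - y))"
      unfolding N_def by (simp add: power2_eq_square)
    then have "norm (q - p) \<le> 2 * norm (x - y)"
      by (cases "norm (q - p) = 0") (auto simp: mult_le_cancel_left_pos)
    then show ?thesis unfolding p_def q_def by (simp add: norm_minus_commute)
  qed
qed



lemma ereal_half_less:
  assumes "ereal a < r / 2"
  shows "ereal (2 * a) < r"
  using assms by (cases r) auto

lemma xtilde_dist:
  fixes X :: "'a::euclidean_space set"
  assumes "x \<in> Xtilde X"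
  shows "ereal (2 * infdist x X) < reach X \<and> X \<noteq> {}"
proof -
  obtain y b where yb: "x = y + b" "y \<in> X" "ereal (norm b) < reach X / 2"
    using assms unfolding Xtilde_def by blast
  have "infdist x X \<le> dist x y" using yb(2) by (rule infdist_le)
  also have "dist x y = norm b" using yb(1) by (simp add: dist_norm)
  finally have "ereal (infdist x X) < reach X / 2" using yb(3) by (meson ereal_less_eq(3) order_le_less_trans)
  then show ?thesis using ereal_half_less yb(2) by blast
qed

lemma get_tau:
  fixes X :: "'a::euclidean_space set"
  assumes "ereal c < reach X"
  shows "\<exists>\<tau>. c < \<tau> \<and> uniq X \<tau>"
proof -
  obtain e where e: "e \<in> {ereal t | t. t \<ge> 0 \<and>
      (\<forall>x. infdist x X < t \<longrightarrow> (\<exists>!y. y \<in> closure X \<and> dist x y = infdist x X))}" "ereal c < e"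
    using assms unfolding reach_def less_Sup_iff by blast
  then obtain t where "e = ereal t" "\<forall>x. infdist x X < t \<longrightarrow> (\<exists>!y. y \<in> closure X \<and> dist x y = infdist x X)"
    by blast
  then show ?thesis using e(2) unfolding uniq_def by auto
qed

lemma secants_norm:
  fixes X :: "'a::euclidean_space set"
  assumes "x \<in> secants X"
  shows "norm x = 1"
proof -
  have "{(1 / norm (x - y)) *\<^sub>R (x - y) | x y. x \<in> X \<and> y \<in> X \<and> x \<noteq> y} \<subseteq> sphere 0 1"
    by auto
  then have "secants X \<subseteq> sphere 0 1" unfolding secants_def
    by (rule closure_minimal) simp
  then show ?thesis using assms by auto
qed

lemma Ft_closed:
  "closed (Ft X P w l eps x)"
proof -
  have e: "Ft X P w l eps x = (\<Inter>i\<in>{1..2*l}. {z. gt X P w l eps i z x \<le> 0})"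
    unfolding Ft_def by auto
  have "closed {z. gt X P w l eps i z x \<le> 0}" for i
  proof (cases "i \<le> l")
    case True
    then show ?thesis unfolding gt_def by (simp, intro closed_Collect_le continuous_intros)
  next
    case False
    then show ?thesis unfolding gt_def by (simp, intro closed_Collect_le continuous_intros)
  qed
  then show ?thesis unfolding e by (intro closed_INT) auto
qed

lemma beta_min:
  assumes "z \<in> Ft X P w l eps x"
  shows "beta X P w l eps x \<in> Ft X P w l eps x \<and>
         (\<forall>z' \<in> Ft X P w l eps x. norm (beta X P w l eps x) \<le> norm z')"
proof -
  obtain z0 where z0: "z0 \<in> Ft X P w l eps x" "\<And>y. y \<in> Ft X P w l eps x \<Longrightarrow> dist 0 z0 \<le> dist 0 y"
    using distance_attains_inf[OF Ft_closed, of X P w l eps x 0] assms by blast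
  show ?thesis unfolding beta_def
  proof (rule arg_minI[of "\<lambda>z. z \<in> Ft X P w l eps x" z0])
    show "z0 \<in> Ft X P w l eps x" by (rule z0(1))
    show "\<not> norm y < norm z0" if "y \<in> Ft X P w l eps x" for y using z0(2)[OF that] by simp
  qed (auto simp: not_less)
qed

lemma gt_affine:
  "gt X P w l eps i ((1 - d) *\<^sub>R z1 + d *\<^sub>R z2) x
     = (1 - d) * gt X P w l eps i z1 x + d * gt X P w l eps i z2 x"
  unfolding gt_def by (simp add: inner_add_left algebra_simps)

lemma gt_shift:
  assumes "norm (w (if i \<le> l then i else i - l)) = 1" "0 < eps" "eps < 1"
  shows "gt X P w l eps i z v \<le> gt X P w l eps i z u
           + (1 + eps / 30) * norm ((v - nn X v) - (u - nn X u))"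
proof -
  define D where "D = (v - nn X v) - (u - nn X u)"
  define j where "j = (if i \<le> l then i else i - l)"
  have wj: "norm (w j) = 1" using assms(1) unfolding j_def .
  have c1: "\<bar>D \<bullet> w j\<bar> \<le> norm D" using Cauchy_Schwarz_ineq2[of D "w j"] wj by simp
  have c2: "\<bar>norm (v - nn X v) - norm (u - nn X u)\<bar> \<le> norm D"
    unfolding D_def by (rule norm_triangle_ineq3)
  have c3: "eps / 30 * \<bar>norm (v - nn X v) - norm (u - nn X u)\<bar> \<le> eps / 30 * norm D"
    using c2 assms(2) by (intro mult_left_mono) auto
  have ip: "(v - nn X v) \<bullet> w j - (u - nn X u) \<bullet> w j = D \<bullet> w j"
    unfolding D_def by (simp add: inner_diff_left)
  define b where "b = norm (v - nn X v) - norm (u - nn X u)"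
  have c3': "eps / 30 * \<bar>b\<bar> \<le> eps / 30 * norm D" using c3 unfolding b_def .
  have r1: "- (eps / 30 * b) \<le> eps / 30 * norm D"
  proof -
    have m: "eps / 30 * (- b) = - (eps / 30 * b)" by simp
    have "- b \<le> \<bar>b\<bar>" by simp
    then have "eps / 30 * (- b) \<le> eps / 30 * \<bar>b\<bar>" using assms(2) by (intro mult_left_mono) auto
    then show ?thesis using c3' m by linarith
  qed
  have r2: "eps / 30 * b \<le> eps / 30 * norm D"
  proof -
    have "b \<le> \<bar>b\<bar>" by simp
    then have "eps / 30 * b \<le> eps / 30 * \<bar>b\<bar>" using assms(2) by (intro mult_left_mono) auto
    then show ?thesis using c3' by linarith
  qed
  have a1: "D \<bullet> w j \<le> norm D" "- (D \<bullet> w j) \<le> norm D" using c1 by (simp_all add: abs_le_iff)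
  have e1: "(1 + eps / 30) * norm D = norm D + eps / 30 * norm D" by (simp add: distrib_right)
  note fin = r1 r2 a1 e1 b_def
  show ?thesis
  proof (cases "i \<le> l")
    case True
    then have "gt X P w l eps i z v - gt X P w l eps i z u
       = - (D \<bullet> w j) - eps / 30 * b"
      unfolding gt_def j_def b_def using ip unfolding j_def by (simp add: algebra_simps)
    then show ?thesis using fin unfolding D_def[symmetric] by linarith
  next
    case False
    then have "gt X P w l eps i z v - gt X P w l eps i z u
       = (D \<bullet> w j) - eps / 30 * b"
      unfolding gt_def j_def b_def using ip unfolding j_def by (simp add: algebra_simps)
    then show ?thesis using fin unfolding D_def[symmetric] by linarith
  qed
qed



theorem lemma4p4:
  fixes X :: "'a::euclidean_space set" and P :: "'a \<Rightarrow> 'b::euclidean_space"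
    and w :: "nat \<Rightarrow> 'a" and l :: nat and eps :: real and u v :: 'a and zs :: 'b
  assumes reach_pos: "reach X > 0"
    and eps: "0 < eps" "eps < 1"
    and w_in: "\<forall>i \<in> {1..l}. w i \<in> secants X"
    and w_net: "\<forall>x \<in> secants X. \<exists>i \<in> {1..l}. dist x (w i) < eps / 40"
    and Pi_lin: "linear P"
    and Pi_dist: "hull_distortion P (eps / 240) (secants X)"
    and u: "u \<in> Xtilde X - closure X"
    and zs_norm: "norm zs \<le> norm (u - nn X u)"
    and zs_g: "\<forall>i \<in> {1..2*l}. gt X P w l eps i zs u \<le> - (eps / 60) * norm (u - nn X u)"
    and v: "v \<in> ball u (min 1 (eps * norm (u - nn X u) / 480)) \<inter> Xtilde X"
  shows "let \<delta> = 240 * norm (u - v) / (eps * norm (u - nn X u));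
             zv = (1 - \<delta>) *\<^sub>R beta X P w l eps u + \<delta> *\<^sub>R zs
         in (\<forall>i \<in> {1..2*l}. gt X P w l eps i zv v \<le> 0) \<and> zv \<in> Ft X P w l eps v
            \<and> norm (beta X P w l eps v) \<le> norm zv"
proof -
  have uX: "u \<in> Xtilde X" "u \<notin> closure X" using u by auto
  have vX: "v \<in> Xtilde X" using v by auto
  have du: "ereal (2 * infdist u X) < reach X" and Xne: "X \<noteq> {}" using xtilde_dist[OF uX(1)] by auto
  have dv: "ereal (2 * infdist v X) < reach X" using xtilde_dist[OF vX] by auto
  define m where "m = max (infdist u X) (infdist v X)"
  have "ereal (2 * m) < reach X" unfolding m_def using du dv by (cases "infdist u X \<le> infdist v X") (auto simp: max_def)
  then obtain \<tau> where tau: "2 * m < \<tau>" "uniq X \<tau>" using get_tau by blast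
  have mu: "infdist u X \<le> m" and mv: "infdist v X \<le> m" unfolding m_def by auto
  have m0: "0 \<le> m" using mu infdist_nonneg[of u X] by linarith
  have uU: "infdist u X < \<tau>" using mu m0 tau(1) by linarith
  have pu: "nn X u \<in> closure X" "dist u (nn X u) = infdist u X" using nn_props[OF tau(2) uU] by auto
  define N where "N = norm (u - nn X u)"
  have Npos: "0 < N" unfolding N_def using pu(1) uX(2) by auto
  have lip: "norm (nn X u - nn X v) \<le> 2 * norm (u - v)" by (rule nn_lip[OF tau(2) Xne mu mv tau(1)])
  define e where "e = norm (u - v)"
  have e0: "0 \<le> e" unfolding e_def by simp
  have Dl: "norm ((v - nn X v) - (u - nn X u)) \<le> 3 * e"
  proof -
    have "(v - nn X v) - (u - nn X u) = (v - u) - (nn X v - nn X u)" by (simp add: algebra_simps)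
    then have "norm ((v - nn X v) - (u - nn X u)) = norm ((v - u) - (nn X v - nn X u))" by (rule arg_cong)
    also have "\<dots> \<le> norm (v - u) + norm (nn X v - nn X u)" by (rule norm_triangle_ineq4)
    finally have "norm ((v - nn X v) - (u - nn X u)) \<le> norm (v - u) + norm (nn X v - nn X u)" .
    then show ?thesis using lip unfolding e_def by (simp add: norm_minus_commute)
  qed
  have Dl4: "(1 + eps / 30) * norm ((v - nn X v) - (u - nn X u)) \<le> 4 * e"
  proof -
    have "(1 + eps / 30) * norm ((v - nn X v) - (u - nn X u)) \<le> (1 + eps / 30) * (3 * e)"
      using Dl eps by (intro mult_left_mono) auto
    also have "\<dots> = 3 * e + (eps * e) / 10" by (simp add: algebra_simps)
    also have "eps * e \<le> 1 * e" using eps e0 by (intro mult_right_mono) auto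
    then have "3 * e + (eps * e) / 10 \<le> 4 * e" using e0 by simp
    finally show ?thesis .
  qed
  have elt: "e < eps * N / 480" using v unfolding e_def N_def by (simp add: dist_norm)
  define \<delta> where "\<delta> = 240 * e / (eps * N)"
  have epsN: "0 < eps * N" using eps Npos by simp
  have d0: "0 \<le> \<delta>" unfolding \<delta>_def using e0 epsN by simp
  have d1: "\<delta> \<le> 1"
  proof -
    have "240 * e \<le> eps * N" using elt e0 epsN by linarith
    then show ?thesis unfolding \<delta>_def using epsN by (simp add: divide_le_eq)
  qed
  have d4: "\<delta> * (eps / 60 * N) = 4 * e" unfolding \<delta>_def using eps Npos by (simp add: field_simps)
  have zsF: "zs \<in> Ft X P w l eps u"
    unfolding Ft_def
  proof (intro CollectI ballI)
    fix i assume "i \<in> {1..2*l}"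
    then have "gt X P w l eps i zs u \<le> - (eps / 60) * N" using zs_g unfolding N_def by blast
    moreover have "0 \<le> (eps / 60) * N" using eps Npos by simp
    ultimately show "gt X P w l eps i zs u \<le> 0" by linarith
  qed
  define B where "B = beta X P w l eps u"
  have BF: "B \<in> Ft X P w l eps u" using beta_min[OF zsF] unfolding B_def by blast
  define zv where "zv = (1 - \<delta>) *\<^sub>R B + \<delta> *\<^sub>R zs"
  have main: "\<forall>i \<in> {1..2*l}. gt X P w l eps i zv v \<le> 0"
  proof
    fix i assume i: "i \<in> {1..2*l}"
    have j: "(if i \<le> l then i else i - l) \<in> {1..l}" using i by auto
    have wn: "norm (w (if i \<le> l then i else i - l)) = 1" using w_in j secants_norm by blast
    have sh: "gt X P w l eps i z v \<le> gt X P w l eps i z u + 4 * e" for z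
      using gt_shift[of w i l eps X P z v u, OF wn eps] Dl4 by linarith
    define G1 where "G1 = gt X P w l eps i B u"
    define G2 where "G2 = gt X P w l eps i zs u"
    have G1: "G1 \<le> 0" using BF i unfolding Ft_def G1_def by blast
    have G2: "G2 \<le> - (eps / 60 * N)" using zs_g i unfolding G2_def N_def by simp
    have H1: "gt X P w l eps i B v \<le> G1 + 4 * e" using sh unfolding G1_def .
    have H2: "gt X P w l eps i zs v \<le> G2 + 4 * e" using sh unfolding G2_def .
    have "gt X P w l eps i zv v = (1 - \<delta>) * gt X P w l eps i B v + \<delta> * gt X P w l eps i zs v"
      unfolding zv_def by (rule gt_affine)
    also have "\<dots> \<le> (1 - \<delta>) * (G1 + 4 * e) + \<delta> * (G2 + 4 * e)"
      using H1 H2 d0 d1 by (intro add_mono mult_left_mono) auto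
    also have "\<dots> = (1 - \<delta>) * G1 + 4 * e - \<delta> * (4 * e) + \<delta> * G2 + \<delta> * (4 * e)"
      by (simp add: algebra_simps)
    also have "\<dots> \<le> 0"
    proof -
      have "(1 - \<delta>) * G1 \<le> 0" using d1 G1 by (intro mult_nonneg_nonpos) auto
      moreover have "\<delta> * G2 \<le> \<delta> * (- (eps / 60 * N))" using G2 d0 by (rule mult_left_mono)
      moreover have "\<delta> * (- (eps / 60 * N)) = - (4 * e)" using d4 by simp
      ultimately show ?thesis by linarith
    qed
    finally show "gt X P w l eps i zv v \<le> 0" .
  qed
  have zvF: "zv \<in> Ft X P w l eps v" using main unfolding Ft_def by blast
  have nb: "norm (beta X P w l eps v) \<le> norm zv" using beta_min[OF zvF] zvF by blast
  show ?thesis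
    unfolding Let_def N_def[symmetric] e_def[symmetric] \<delta>_def[symmetric] B_def[symmetric] zv_def[symmetric]
    using main zvF nb by blast
qed


end
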